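(* Let $\mathcal{C}_0$ be a linear code of length $\ell$ over a finite field $S$ with $|S|=s$, let $q$ be a power of a prime $p$, let $\mathcal{C}=\mathrm{IC}_q(\mathcal{C}_0)$, and let $n=\ell s$ be its length. If $\mathcal{C}_0$ is $p$-divisible, then $$\mathcal{C}^\perp\cap\mathcal{P}\subseteq\mathcal{C},$$ where $\mathcal{P}=\{c\in\mathbb{F}_q^n:\sum_i c_i=0\}$ is the parity-check code of length $n$; in particular $\dim\mathcal{C}\ge\frac{n-1}{2}$. If moreover $p\mid\ell$, then $\mathcal{C}^\perp\subseteq\mathcal{C}$ and $\dim\mathcal{C}\ge\frac n2$.
   Context: A linear code is $p$-divisible if $p$ divides the Hamming weight of each of its codewords. For a code $\mathcal{C}_0\subseteq S^\ell$, its incidence code over $\mathbb{F}_q$ is $\mathrm{IC}_q(\mathcal{C}_0)=\{u\in\mathbb{F}_q^{S\times[1,\ell]}:\ \sum_{i=1}^\ell u_{(c_i,i)}=0\ \text{for all } c\in\mathcal{C}_0\}$, i.e. the code with parity-check matrix $M$, where $M$ has rows indexed by $c\in\mathcal{C}_0$, columns indexed by $(\alpha,i)\in S\times[1,\ell]$, and $M[c,(\alpha,i)]=1$ iff $c_i=\alpha$. $\mathcal{C}^\perp$ denotes the dual code (here the row space of $M$ over $\mathbb{F}_q$). *)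

theory Defs
  imports "HOL-Analysis.Analysis"
begin

text \<open>Codes of length CARD('l) over a field 'a are subsets of 'a^'l.
  The coordinate set [1,l] is represented by a finite type 'l.\<close>

definition hamming_weight :: "'a::zero ^ 'l::finite \<Rightarrow> nat" where
  "hamming_weight c = card {i. c $ i \<noteq> 0}"

definition linear_code :: "('a::field ^ 'l::finite) set \<Rightarrow> bool" where
  "linear_code C0 \<longleftrightarrow> vec.subspace C0"

definition p_divisible :: "nat \<Rightarrow> ('a::zero ^ 'l::finite) set \<Rightarrow> bool" where
  "p_divisible p C \<longleftrightarrow> (\<forall>c\<in>C. p dvd hamming_weight c)"

definition incidence_row :: "'s ^ 'l::finite \<Rightarrow> 'b::{zero,one} ^ ('s::finite \<times> 'l)" where
  "incidence_row c = (\<chi> x. if c $ snd x = fst x then 1 else 0)"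

definition incidence_code ::
  "('s::finite ^ 'l::finite) set \<Rightarrow> ('b::field ^ ('s \<times> 'l)) set" where
  "incidence_code C0 = {u. \<forall>c\<in>C0. (\<Sum>i\<in>UNIV. u $ (c $ i, i)) = 0}"

definition incidence_dual ::
  "('s::finite ^ 'l::finite) set \<Rightarrow> ('b::field ^ ('s \<times> 'l)) set" where
  "incidence_dual C0 = vec.span (incidence_row ` C0)"

definition parity_code :: "('b::field ^ 'n::finite) set" where
  "parity_code = {c. (\<Sum>i\<in>UNIV. c $ i) = 0}"

end

theory Submission
  imports Defs
begin

definition ip :: "'b::field ^ 'n::finite \<Rightarrow> 'b ^ 'n \<Rightarrow> 'b" where
  "ip x y = (\<Sum>j\<in>UNIV. x $ j * y $ j)"

lemma ip_add: "ip (x + y) z = ip x z + ip y z"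
  by (simp add: ip_def distrib_right sum.distrib)

lemma ip_scale: "ip (c *s x) z = c * ip x z"
  by (simp add: ip_def sum_distrib_left mult.assoc)

lemma ip_zero: "ip 0 z = 0"
  by (simp add: ip_def)

lemma ip_sym: "ip x y = ip y x"
  by (simp add: ip_def mult.commute)

lemma subspace_ker_ip: "vec.subspace {x. \<forall>b\<in>B. ip x b = 0}"
  unfolding vec.subspace_def by (auto simp: ip_add ip_scale ip_zero)

lemma subspace_ker_sum:
  "vec.subspace {x::'b::field^'n. (\<Sum>j\<in>UNIV. x $ j) = 0}"
  unfolding vec.subspace_def by (auto simp: sum.distrib sum_distrib_left[symmetric])

lemma dim_cut:
  fixes S :: "('b::field ^ 'n::finite) set"
  assumes S: "vec.subspace S"
    and add: "\<And>x y. \<phi> (x + y) = \<phi> x + \<phi> y"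
    and sc: "\<And>c x. \<phi> (c *s x) = c * \<phi> x"
  shows "vec.dim S \<le> vec.dim (S \<inter> {x. \<phi> x = 0}) + 1"
proof (cases "\<forall>v\<in>S. \<phi> v = 0")
  case True
  then have "S \<inter> {x. \<phi> x = 0} = S" by auto
  then show ?thesis by simp
next
  case False
  then obtain v where v: "v \<in> S" "\<phi> v \<noteq> 0" by auto
  have neg: "\<phi> (x - y) = \<phi> x - \<phi> y" for x y
    using add[of "x - y" y] by simp
  have "S \<subseteq> vec.span (insert v (S \<inter> {x. \<phi> x = 0}))"
  proof
    fix w assume w: "w \<in> S"
    define t where "t = \<phi> w / \<phi> v"
    have "w - t *s v \<in> S" using S v w by (simp add: vec.subspace_diff vec.subspace_scale)
    moreover have "\<phi> (w - t *s v) = 0" using v by (simp add: neg sc t_def)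
    ultimately have a: "w - t *s v \<in> vec.span (insert v (S \<inter> {x. \<phi> x = 0}))"
      by (simp add: vec.span_base)
    have b: "t *s v \<in> vec.span (insert v (S \<inter> {x. \<phi> x = 0}))"
      by (simp add: vec.span_base vec.span_scale)
    have "w = (w - t *s v) + t *s v" by simp
    then show "w \<in> vec.span (insert v (S \<inter> {x. \<phi> x = 0}))"
      using vec.span_add[OF a b] by metis
  qed
  then have "vec.dim S \<le> vec.dim (insert v (S \<inter> {x. \<phi> x = 0}))"
    by (rule vec.dim_mono)
  also have "\<dots> \<le> vec.dim (S \<inter> {x. \<phi> x = 0}) + 1"
    by (simp add: vec.dim_insert)
  finally show ?thesis .
qed

lemma dim_ker_ip:
  fixes B :: "('b::field ^ 'n::finite) set"
  assumes "finite B"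
  shows "CARD('n) \<le> vec.dim {x. \<forall>b\<in>B. ip x b = 0} + card B"
  using assms
proof (induction B rule: finite_induct)
  case empty
  then show ?case using vec_dim_card[where 'a='b and 'n='n] by simp
next
  case (insert b B)
  have eq: "{x. \<forall>b'\<in>insert b B. ip x b' = 0} = {x. \<forall>b\<in>B. ip x b = 0} \<inter> {x. ip x b = 0}"
    by auto
  have h: "vec.dim {x. \<forall>b\<in>B. ip x b = 0} \<le> vec.dim ({x. \<forall>b\<in>B. ip x b = 0} \<inter> {x. ip x b = 0}) + 1"
    by (rule dim_cut[OF subspace_ker_ip]) (simp_all add: ip_add ip_scale)
  have c: "card (insert b B) = card B + 1" using insert by simp
  show ?case unfolding eq c using h insert.IH by linarith
qed

lemma char_p:
  assumes "prime p" "k > 0" "CARD('b::{field,finite}) = p ^ k"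
  shows "(of_nat p :: 'b) = 0"
proof -
  have "(\<Sum>y\<in>(UNIV::'b set). y) = (\<Sum>y\<in>UNIV. y + 1)"
    by (rule sum.reindex_bij_witness[of _ "\<lambda>y. y + 1" "\<lambda>y. y - 1"]) auto
  also have "\<dots> = (\<Sum>y\<in>UNIV. y) + of_nat CARD('b)"
    by (simp add: sum.distrib)
  finally have "(of_nat CARD('b) :: 'b) = 0" by simp
  then have "(of_nat p :: 'b) ^ k = 0" using assms by (simp add: of_nat_power)
  then show ?thesis by simp
qed

lemma row_ip:
  fixes u :: "'b::field ^ ('s::finite \<times> 'l::finite)"
  shows "ip u (incidence_row c) = (\<Sum>i\<in>UNIV. u $ (c $ i, i))"
proof -
  have "ip u (incidence_row c) = (\<Sum>a\<in>UNIV. \<Sum>i\<in>UNIV. u $ (a, i) * (if c $ i = a then 1 else 0))"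
    unfolding ip_def incidence_row_def
    by (simp add: sum.cartesian_product UNIV_Times_UNIV[symmetric] split_beta del: UNIV_Times_UNIV)
  also have "\<dots> = (\<Sum>i\<in>UNIV. \<Sum>a\<in>UNIV. u $ (a, i) * (if c $ i = a then 1 else 0))"
    by (rule sum.swap)
  also have "\<dots> = (\<Sum>i\<in>UNIV. u $ (c $ i, i))"
    by (simp add: if_distrib cong: if_cong)
  finally show ?thesis .
qed

lemma row_row:
  "ip (incidence_row c) (incidence_row d :: 'b::field ^ ('s::finite \<times> 'l::finite))
     = of_nat (card {i. c $ i = (d::'s^'l) $ i})"
proof -
  have "ip (incidence_row c) (incidence_row d :: 'b ^ ('s \<times> 'l))
      = (\<Sum>i\<in>UNIV. (incidence_row c :: 'b ^ ('s \<times> 'l)) $ (d $ i, i))"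
    by (simp add: ip_sym[of "incidence_row c"] row_ip)
  also have "\<dots> = (\<Sum>i\<in>UNIV. if c $ i = d $ i then 1 else 0)"
    by (simp add: incidence_row_def)
  also have "\<dots> = of_nat (card {i. c $ i = d $ i})"
    by (simp add: sum.If_cases)
  finally show ?thesis .
qed

lemma row_sum:
  "(\<Sum>j\<in>UNIV. (incidence_row c :: 'b::field ^ ('s::finite \<times> 'l::finite)) $ j) = of_nat CARD('l)"
proof -
  have "(\<Sum>j\<in>UNIV. (incidence_row c :: 'b ^ ('s \<times> 'l)) $ j) = ip (\<chi> _. 1) (incidence_row c :: 'b ^ ('s \<times> 'l))"
    by (simp add: ip_def)
  also have "\<dots> = of_nat CARD('l)" by (simp add: row_ip)
  finally show ?thesis .
qed

theorem mainTheorem14: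
  fixes C0 :: "('a::{field,finite} ^ 'l::finite) set"
    and p k :: nat
  assumes lin: "linear_code C0"
    and p_prime: "prime p" and k_pos: "k > 0"
    and q_def: "CARD('b::{field,finite}) = p ^ k"
    and div: "p_divisible p C0"
  shows "(incidence_dual C0 \<inter> parity_code \<subseteq> (incidence_code C0 :: ('b ^ ('a \<times> 'l)) set))
       \<and> real (vec.dim (incidence_code C0 :: ('b ^ ('a \<times> 'l)) set))
            \<ge> (real (CARD('l) * CARD('a)) - 1) / 2
       \<and> (p dvd CARD('l) \<longrightarrow>
            incidence_dual C0 \<subseteq> (incidence_code C0 :: ('b ^ ('a \<times> 'l)) set)
          \<and> real (vec.dim (incidence_code C0 :: ('b ^ ('a \<times> 'l)) set))
            \<ge> real (CARD('l) * CARD('a)) / 2)"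
proof -
  let ?r = "incidence_row :: 'a^'l \<Rightarrow> 'b ^ ('a \<times> 'l)"
  let ?R = "?r ` C0"
  let ?D = "incidence_dual C0 :: ('b ^ ('a \<times> 'l)) set"
  let ?C = "incidence_code C0 :: ('b ^ ('a \<times> 'l)) set"
  let ?P = "parity_code :: ('b ^ ('a \<times> 'l)) set"
  let ?s = "\<lambda>v::'b ^ ('a \<times> 'l). \<Sum>j\<in>UNIV. v $ j"
  let ?l = "CARD('l)"
  have Ddef: "?D = vec.span ?R" by (simp add: incidence_dual_def)
  have Cdef: "?C = {u. \<forall>d\<in>C0. ip u (?r d) = 0}"
    by (simp add: incidence_code_def row_ip)
  have Pdef: "?P = {v. ?s v = 0}" by (simp add: parity_code_def)
  have cp: "(of_nat p :: 'b) = 0" using char_p[OF p_prime k_pos q_def] .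
  have sub: "vec.subspace C0" using lin by (simp add: linear_code_def)
  have rr: "ip (?r c) (?r d) = of_nat ?l" if c: "c \<in> C0" and d: "d \<in> C0" for c d
  proof -
    have cd: "c - d \<in> C0" using sub c d by (rule vec.subspace_diff)
    have hw: "hamming_weight (c - d) = card {i. c $ i \<noteq> d $ i}"
      by (simp add: hamming_weight_def)
    obtain m where m: "card {i. c $ i \<noteq> d $ i} = p * m"
      using div cd hw unfolding p_divisible_def by (metis dvdE)
    have z: "(of_nat (card {i. c $ i \<noteq> d $ i}) :: 'b) = 0" by (simp add: m cp)
    have "card {i. c $ i = d $ i} + card {i. c $ i \<noteq> d $ i} = card (UNIV :: 'l set)"
    proof -
      have "{i. c $ i = d $ i} \<union> {i. c $ i \<noteq> d $ i} = UNIV" by auto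
      moreover have "{i. c $ i = d $ i} \<inter> {i. c $ i \<noteq> d $ i} = {}" by auto
      ultimately show ?thesis by (metis card_Un_disjoint finite)
    qed
    then have "(of_nat ?l :: 'b) = of_nat (card {i. c $ i = d $ i}) + of_nat (card {i. c $ i \<noteq> d $ i})"
      by (metis of_nat_add)
    then show ?thesis using z by (simp add: row_row)
  qed
  have key: "ip v (?r d) = ?s v" if d: "d \<in> C0" and v: "v \<in> ?D" for v d
  proof -
    have "v \<in> vec.span ?R" using v Ddef by simp
    then show ?thesis
    proof (induction rule: vec.span_induct)
      case base
      show ?case unfolding vec.subspace_def
        by (auto simp: ip_add ip_scale ip_zero sum.distrib sum_distrib_left)
    next
      case (step x)
      then obtain c where "c \<in> C0" "x = ?r c" by auto
      then show ?case using rr[OF _ d] by (simp add: row_sum)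
    qed
  qed
  have part1: "?D \<inter> ?P \<subseteq> ?C"
  proof
    fix v assume "v \<in> ?D \<inter> ?P"
    then show "v \<in> ?C" unfolding Cdef Pdef using key by auto
  qed
  obtain B where B: "B \<subseteq> ?R" "vec.independent B" "?R \<subseteq> vec.span B" "card B = vec.dim ?R"
    using vec.basis_exists[of ?R] by blast
  have finB: "finite B" by simp
  have CB: "?C = {x. \<forall>b\<in>B. ip x b = 0}"
  proof
    show "?C \<subseteq> {x. \<forall>b\<in>B. ip x b = 0}" unfolding Cdef using B(1) by auto
  next
    show "{x. \<forall>b\<in>B. ip x b = 0} \<subseteq> ?C"
    proof
      fix x assume x: "x \<in> {x. \<forall>b\<in>B. ip x b = 0}"
      have "ip x y = 0" if y: "y \<in> vec.span B" for y
        using y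
      proof (induction rule: vec.span_induct)
        case base
        show ?case unfolding vec.subspace_def
          by (auto simp: ip_sym[of x] ip_add ip_scale ip_zero)
      next
        case (step y)
        then show ?case using x by auto
      qed
      then show "x \<in> ?C" unfolding Cdef using B(3) by auto
    qed
  qed
  have n1: "CARD('a \<times> 'l) \<le> vec.dim ?C + vec.dim ?D"
    using dim_ker_ip[OF finB] CB B(4) Ddef by (simp add: vec.dim_span)
  have nn: "CARD('a \<times> 'l) = ?l * CARD('a)" by simp
  have Dsub: "vec.subspace ?D" unfolding Ddef by (rule vec.subspace_span)
  have n2: "vec.dim ?D \<le> vec.dim (?D \<inter> {x. ?s x = 0}) + 1"
    by (rule dim_cut[OF Dsub]) (simp_all add: sum.distrib sum_distrib_left)
  have n3: "vec.dim (?D \<inter> {x. ?s x = 0}) \<le> vec.dim ?C"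
    using part1 Pdef by (intro vec.dim_subset) auto
  have nat1: "?l * CARD('a) \<le> 2 * vec.dim ?C + 1" using n1 n2 n3 nn by linarith
  have r1: "real (?l * CARD('a)) \<le> real (2 * vec.dim ?C + 1)"
    using nat1 by (simp only: of_nat_le_iff)
  have part2: "real (vec.dim ?C) \<ge> (real (?l * CARD('a)) - 1) / 2"
    using r1 by simp
  have part3: "p dvd ?l \<longrightarrow> ?D \<subseteq> ?C \<and> real (vec.dim ?C) \<ge> real (?l * CARD('a)) / 2"
  proof
    assume pl: "p dvd ?l"
    have l0: "(of_nat ?l :: 'b) = 0" using pl cp by (metis dvdE of_nat_mult mult_zero_left)
    have DP: "?D \<subseteq> ?P"
    proof
      fix v assume "v \<in> ?D"
      then have "v \<in> vec.span ?R" using Ddef by simp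
      then have "?s v = 0"
      proof (induction rule: vec.span_induct)
        case base
        show ?case using subspace_ker_sum by (simp add: Collect_mono)
      next
        case (step x)
        then show ?case using l0 by (auto simp: row_sum)
      qed
      then show "v \<in> ?P" by (simp add: parity_code_def)
    qed
    then have DC: "?D \<subseteq> ?C" using part1 by auto
    have "vec.dim ?D \<le> vec.dim ?C" using DC by (rule vec.dim_subset)
    then have "?l * CARD('a) \<le> 2 * vec.dim ?C" using n1 nn by linarith
    then have "real (?l * CARD('a)) \<le> real (2 * vec.dim ?C)" by (simp only: of_nat_le_iff)
    then show "?D \<subseteq> ?C \<and> real (vec.dim ?C) \<ge> real (?l * CARD('a)) / 2" using DC by simp
  qed
  show ?thesis using part1 part2 part3 by blast
qed

end
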